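(* Let $q\ge 3$, $k\ge 1$ and $h\geq 2$ be integers with $h\le\lfloor q/2\rfloor$. Then $$SO(L_{q,h,k})=(2qk-5k+5)\sqrt{2}+(4k-4)\sqrt{13}.$$
   Context: For a finite simple graph $G$, $SO(G)=\sum_{uv\in E(G)}\sqrt{d_u^2+d_v^2}$, where $d_u$ is the degree of $u$ in $G$ (the Sombor index). The graph $L_{q,h,k}$ is the link of $k$ disjoint copies $G_1,\ldots,G_k$ of the cycle $C_q$ with respect to vertices $x_i,y_i\in V(G_i)$ at distance $h$ in $G_i$; i.e. it is obtained from the disjoint union of the $k$ cycles by adding the edges $y_ix_{i+1}$ for $i=1,\ldots,k-1$. *)

theory Defs
  imports Complex_Main
begin

definition simple_graph :: "'a set \<Rightarrow> 'a set set \<Rightarrow> bool" where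
  "simple_graph V E \<longleftrightarrow> finite V \<and> (\<forall>e\<in>E. e \<subseteq> V \<and> card e = 2)"

definition degree :: "'a set set \<Rightarrow> 'a \<Rightarrow> nat" where
  "degree E u = card {v. {u, v} \<in> E}"

definition sombor :: "'a set set \<Rightarrow> real" where
  "sombor E = (\<Sum>e\<in>E. sqrt (\<Sum>w\<in>e. (real (degree E w))\<^sup>2))"

text \<open>Link graph L_{q,h,k}: vertex (i,j) is vertex j of the i-th copy of C_q
(i < k, j < q), with cycle edges (i,j)(i,(j+1) mod q); x_i = (i,0) and
y_i = (i,h) (at distance h in C_q when h \<le> q div 2); link edges y_i x_{i+1}.\<close>

definition link_V :: "nat \<Rightarrow> nat \<Rightarrow> (nat \<times> nat) set" where
  "link_V q k = {..<k} \<times> {..<q}"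

definition link_E :: "nat \<Rightarrow> nat \<Rightarrow> nat \<Rightarrow> (nat \<times> nat) set set" where
  "link_E q h k =
     {{(i, j), (i, (j + 1) mod q)} | i j. i < k \<and> j < q}
     \<union> {{(i, h), (i + 1, 0)} | i. i + 1 < k}"

end

theory Submission imports Defs begin

definition sc :: "nat \<Rightarrow> nat \<Rightarrow> nat" where
  "sc q j = (if j+1 = q then 0 else j+1)"

definition pr :: "nat \<Rightarrow> nat \<Rightarrow> nat" where
  "pr q j = (if j = 0 then q - 1 else j - 1)"

lemma suc_mod: "(j::nat) < q \<Longrightarrow> (j+1) mod q = sc q j"
  by (auto simp: sc_def)

lemma suc_mod': "(j::nat) < q \<Longrightarrow> Suc j mod q = sc q j"
  using suc_mod by simp

definition cyc :: "nat \<Rightarrow> nat \<Rightarrow> (nat \<times> nat) set set" where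
  "cyc q k = {{(i, j), (i, sc q j)} | i j. i < k \<and> j < q}"

definition lnk :: "nat \<Rightarrow> nat \<Rightarrow> (nat \<times> nat) set set" where
  "lnk h k = {{(i, h), (i + 1, 0)} | i. i + 1 < k}"

lemma E_eq: "link_E q h k = cyc q k \<union> lnk h k"
proof -
  have "{{(i, j), (i, (j + 1) mod q)} | i j. i < k \<and> j < q} = cyc q k"
    unfolding cyc_def by (intro Collect_cong ex_cong1) (auto simp: suc_mod suc_mod')
  then show ?thesis unfolding link_E_def lnk_def by simp
qed

definition ex :: "nat \<Rightarrow> nat \<Rightarrow> nat \<Rightarrow> nat \<Rightarrow> (nat\<times>nat) set" where
  "ex h k i j = (if 0<i \<and> j=0 then {(i-1,h)} else {}) \<union> (if i+1<k \<and> j=h then {(i+1,0)} else {})"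

lemma cyc_mem:
  assumes q: "q \<ge> 3" and ij: "i<k" "j<q"
  shows "{(i,j),(a,b)} \<in> cyc q k \<longleftrightarrow> (a,b) = (i, sc q j) \<or> (a,b) = (i, pr q j)"
proof
  assume "{(i,j),(a,b)} \<in> cyc q k"
  then obtain i' j' where h: "i'<k" "j'<q" "{(i,j),(a,b)} = {(i',j'),(i',sc q j')}"
    unfolding cyc_def by blast
  then show "(a,b) = (i, sc q j) \<or> (a,b) = (i, pr q j)"
    using q ij by (auto simp: doubleton_eq_iff sc_def pr_def split: if_splits)
next
  assume "(a,b) = (i, sc q j) \<or> (a,b) = (i, pr q j)"
  then show "{(i,j),(a,b)} \<in> cyc q k"
  proof
    assume "(a,b) = (i, sc q j)"
    then show ?thesis using ij unfolding cyc_def by blast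
  next
    assume e: "(a,b) = (i, pr q j)"
    have "pr q j < q" "sc q (pr q j) = j" using q ij by (auto simp: sc_def pr_def)
    then have "{(i,j),(a,b)} = {(i, pr q j), (i, sc q (pr q j))}" using e by auto
    then show ?thesis using ij \<open>pr q j < q\<close> unfolding cyc_def by blast
  qed
qed

lemma lnk_mem:
  assumes "h \<ge> 2" "i < k"
  shows "{(i,j),(a,b)} \<in> lnk h k \<longleftrightarrow> (a,b) \<in> ex h k i j"
  using assms unfolding lnk_def ex_def by (auto simp: doubleton_eq_iff)

lemma nbrs:
  assumes q: "q \<ge> 3" "h \<ge> 2" and ij: "i<k" "j<q"
  shows "{v. {(i,j),v} \<in> link_E q h k} = {(i, sc q j), (i, pr q j)} \<union> ex h k i j"
proof (rule set_eqI)
  fix v :: "nat \<times> nat"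
  obtain a b where v: "v = (a,b)" by (cases v)
  show "v \<in> {v. {(i,j),v} \<in> link_E q h k} \<longleftrightarrow> v \<in> {(i, sc q j), (i, pr q j)} \<union> ex h k i j"
    using v cyc_mem[OF q(1) ij, of a b] lnk_mem[OF q(2) ij(1), of j a b] unfolding E_eq by auto
qed

lemma deg:
  assumes q: "q \<ge> 3" "h \<ge> 2" "h \<le> q div 2" and ij: "i<k" "j<q"
  shows "real (degree (link_E q h k) (i,j)) = 2 + (if 0<i \<and> j=0 then 1 else 0) + (if i+1<k \<and> j=h then 1 else 0)"
proof -
  have d: "sc q j \<noteq> pr q j" using q ij by (auto simp: sc_def pr_def)
  show ?thesis
    unfolding degree_def nbrs[OF q(1,2) ij] using d q
    by (auto simp: ex_def card_insert_if)
qed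

lemma sum_ind: "(t::nat) < q \<Longrightarrow> (\<Sum>j<q. (if P \<and> j = t then 1 else 0) :: real) = (if P then 1 else 0)"
  by (cases P) (auto simp: sum.delta)

lemma sum_pos: "(k::nat) \<ge> 1 \<Longrightarrow> (\<Sum>i<k. (if 0 < i then 1 else 0) :: real) = real k - 1"
proof -
  assume k: "k \<ge> 1"
  have "(\<Sum>i<k. (if 0 < i then 1 else 0) :: real) = (\<Sum>i\<in>{i\<in>{..<k}. 0 < i}. 1)"
    by (rule sum.inter_filter[symmetric]) simp
  also have "{i\<in>{..<k}. 0 < i} = {1..<k}" by auto
  finally show ?thesis using k by simp
qed

lemma sum_lt: "(k::nat) \<ge> 1 \<Longrightarrow> (\<Sum>i<k. (if i + 1 < k then 1 else 0) :: real) = real k - 1"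
proof -
  assume k: "k \<ge> 1"
  have "(\<Sum>i<k. (if i + 1 < k then 1 else 0) :: real) = (\<Sum>i\<in>{i\<in>{..<k}. i + 1 < k}. 1)"
    by (rule sum.inter_filter[symmetric]) simp
  also have "{i\<in>{..<k}. i + 1 < k} = {..<k-1}" by auto
  finally show ?thesis using k by simp
qed

lemma edge_val:
  assumes q: "q \<ge> 3" "h \<ge> 2" "h \<le> q div 2" and ij: "i<k" "j<q"
  shows "sqrt ((real (degree (link_E q h k) (i,j)))\<^sup>2 + (real (degree (link_E q h k) (i,sc q j)))\<^sup>2)
     = sqrt 8 + ((if 0<i \<and> j=0 then 1 else 0) + (if i+1<k \<and> j=h then 1 else 0)
              + (if 0<i \<and> j=q-1 then 1 else 0) + (if i+1<k \<and> j+1=h then 1 else 0)) * (sqrt 13 - sqrt 8)"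
proof -
  have s: "sc q j < q" using ij q by (auto simp: sc_def)
  have d2: "real (degree (link_E q h k) (i,sc q j)) = 2 + (if 0<i \<and> j=q-1 then 1 else 0) + (if i+1<k \<and> j+1=h then 1 else 0)"
    unfolding deg[OF q ij(1) s] using q ij by (auto simp: sc_def)
  have hq: "h + 1 < q" using q by linarith
  show ?thesis unfolding deg[OF q ij] d2 using q ij hq
    by (auto simp: power2_eq_square)
qed


lemma aux_sum: "(\<Sum>j\<in>A. c + (a j + b j + e j + f j) * (D::real)) = real (card A) * c + (sum a A + sum b A + sum e A + sum f A) * D"
  by (simp add: sum.distrib sum_distrib_right[symmetric])

lemma sum_lt': "(k::nat) \<ge> 1 \<Longrightarrow> (\<Sum>i<k. (if Suc i < k then 1 else 0) :: real) = real k - 1"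
  using sum_lt by simp

theorem mainTheorem9:
  fixes q h k :: nat
  assumes "q \<ge> 3" and "k \<ge> 1" and "h \<ge> 2" and "h \<le> q div 2"
  shows "simple_graph (link_V q k) (link_E q h k) \<and>
         sombor (link_E q h k) =
           (2 * real q * real k - 5 * real k + 5) * sqrt 2 + (4 * real k - 4) * sqrt 13"
proof
  note q = assms(1,3,4)
  have hq: "h + 1 < q" using q by linarith
  show "simple_graph (link_V q k) (link_E q h k)"
    unfolding simple_graph_def link_V_def link_E_def using hq
    by (auto simp: card_insert_if suc_mod' sc_def)
  define E where "E = link_E q h k"
  define F where "F e = sqrt (\<Sum>w\<in>e. (real (degree E w))\<^sup>2)" for e :: "(nat \<times> nat) set"
  have cyc_im: "cyc q k = (\<lambda>(i,j). {(i,j),(i,sc q j)}) ` ({..<k} \<times> {..<q})"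
    unfolding cyc_def by auto
  have inj1: "inj_on (\<lambda>(i,j). {(i,j),(i,sc q j)}) ({..<k} \<times> {..<q})"
    using q by (auto simp: inj_on_def doubleton_eq_iff sc_def split: if_splits)
  have lnk_im: "lnk h k = (\<lambda>i. {(i,h),(i+1,0)}) ` {..<k-1}"
    unfolding lnk_def by auto
  have inj2: "inj_on (\<lambda>i. {(i,h),(i+1,0)}) {..<k-1}"
    by (auto simp: inj_on_def doubleton_eq_iff)
  have disj: "cyc q k \<inter> lnk h k = {}"
    unfolding cyc_def lnk_def by (auto simp: doubleton_eq_iff)
  have fin1: "finite (cyc q k)" unfolding cyc_im by simp
  have fin2: "finite (lnk h k)" unfolding lnk_im by simp
  have "sombor E = sum F (cyc q k) + sum F (lnk h k)"
    unfolding sombor_def F_def E_def E_eq by (rule sum.union_disjoint[OF fin1 fin2 disj])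
  also have "sum F (cyc q k) = (\<Sum>(i,j)\<in>{..<k} \<times> {..<q}. F {(i,j),(i,sc q j)})"
    unfolding cyc_im by (subst sum.reindex[OF inj1]) (simp add: case_prod_unfold)
  also have "\<dots> = (\<Sum>(i,j)\<in>{..<k} \<times> {..<q}. sqrt 8 + ((if 0<i \<and> j=0 then 1 else 0) + (if i+1<k \<and> j=h then 1 else 0)
              + (if 0<i \<and> j=q-1 then 1 else 0) + (if i+1<k \<and> j+1=h then 1 else 0)) * (sqrt 13 - sqrt 8))"
  proof (rule sum.cong[OF refl])
    fix x assume "x \<in> {..<k} \<times> {..<q}"
    then obtain i j where x: "x = (i,j)" "i<k" "j<q" by auto
    have "sc q j \<noteq> j" using q x by (auto simp: sc_def)
    then have "F {(i,j),(i,sc q j)} = sqrt ((real (degree (link_E q h k) (i,j)))\<^sup>2 + (real (degree (link_E q h k) (i,sc q j)))\<^sup>2)"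
      unfolding F_def E_def by simp
    then show "(case x of (i,j) \<Rightarrow> F {(i,j),(i,sc q j)}) = (case x of (i,j) \<Rightarrow> sqrt 8 + ((if 0<i \<and> j=0 then 1 else 0) + (if i+1<k \<and> j=h then 1 else 0)
              + (if 0<i \<and> j=q-1 then 1 else 0) + (if i+1<k \<and> j+1=h then 1 else 0)) * (sqrt 13 - sqrt 8))"
      using edge_val[OF q x(2,3)] x(1) by simp
  qed
  also have "\<dots> = (\<Sum>i<k. \<Sum>j<q. sqrt 8 + ((if 0<i \<and> j=0 then 1 else 0) + (if i+1<k \<and> j=h then 1 else 0)
              + (if 0<i \<and> j=q-1 then 1 else 0) + (if i+1<k \<and> j+1=h then 1 else 0)) * (sqrt 13 - sqrt 8))"
    by (simp add: sum.cartesian_product)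
  also have "\<dots> = (\<Sum>i<k. real q * sqrt 8 + 2 * ((if 0<i then 1 else 0) + (if i+1<k then 1 else 0)) * (sqrt 13 - sqrt 8))"
  proof (rule sum.cong[OF refl])
    fix i assume "i \<in> {..<k}"
    have e1: "(\<Sum>j<q. (if 0<i \<and> j=0 then 1 else 0) :: real) = (if 0<i then 1 else 0)"
      using sum_ind[of 0 q "0<i"] q by simp
    have e2: "(\<Sum>j<q. (if i+1<k \<and> j=h then 1 else 0) :: real) = (if i+1<k then 1 else 0)"
      using sum_ind[of h q "i+1<k"] hq by simp
    have e3: "(\<Sum>j<q. (if 0<i \<and> j=q-1 then 1 else 0) :: real) = (if 0<i then 1 else 0)"
      using sum_ind[of "q-1" q "0<i"] q by simp
    have e4': "\<And>j. (j+1=h) = (j = h-1)" using q by auto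
    have e4: "(\<Sum>j<q. (if i+1<k \<and> j+1=h then 1 else 0) :: real) = (if i+1<k then 1 else 0)"
      unfolding e4' using sum_ind[of "h-1" q "i+1<k"] hq by simp
    show "(\<Sum>j<q. sqrt 8 + ((if 0<i \<and> j=0 then 1 else 0) + (if i+1<k \<and> j=h then 1 else 0)
              + (if 0<i \<and> j=q-1 then 1 else 0) + (if i+1<k \<and> j+1=h then 1 else 0)) * (sqrt 13 - sqrt 8))
        = real q * sqrt 8 + 2 * ((if 0<i then 1 else 0) + (if i+1<k then 1 else 0)) * (sqrt 13 - sqrt 8)"
      by (subst aux_sum) (simp only: e1 e2 e3 e4 card_lessThan, simp)
  qed
  also have "\<dots> = real k * real q * sqrt 8 + 2 * ((real k - 1) + (real k - 1)) * (sqrt 13 - sqrt 8)"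
    by (simp add: sum.distrib sum_distrib_right[symmetric] sum_distrib_left[symmetric] sum_pos[OF assms(2)] sum_lt[OF assms(2)] sum_lt'[OF assms(2)])
  also have "sum F (lnk h k) = (\<Sum>i<k-1. F {(i,h),(i+1,0)})"
    unfolding lnk_im by (subst sum.reindex[OF inj2]) simp
  also have "\<dots> = (\<Sum>i<k-1. 3 * sqrt 2)"
  proof (rule sum.cong[OF refl])
    fix i assume i: "i \<in> {..<k-1}"
    have a: "real (degree E (i,h)) = 3" unfolding E_def using deg[OF q, of i k h] i q hq by auto
    have b: "real (degree E (i+1,0)) = 3" unfolding E_def using deg[OF q, of "i+1" k 0] i q by auto
    have "F {(i,h),(i+1,0)} = sqrt (3^2 + 3^2)" unfolding F_def using a b by simp
    also have "\<dots> = sqrt (3^2 * 2)" by simp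
    also have "\<dots> = 3 * sqrt 2" by (simp only: real_sqrt_mult real_sqrt_abs)
    finally show "F {(i,h),(i+1,0)} = 3 * sqrt 2" .
  qed
  also have "sqrt 8 = 2 * sqrt 2"
  proof -
    have "sqrt 8 = sqrt (2^2 * 2)" by simp
    also have "\<dots> = 2 * sqrt 2" by (simp only: real_sqrt_mult real_sqrt_abs)
    finally show ?thesis .
  qed
  finally show "sombor (link_E q h k) =
           (2 * real q * real k - 5 * real k + 5) * sqrt 2 + (4 * real k - 4) * sqrt 13"
    unfolding E_def using assms(2) by (simp add: of_nat_diff algebra_simps)
qed

end
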